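(* Let $f(z) = e^{2\pi i\alpha}z+O(z^2)$, $\alpha\in\mathbb{R}\setminus\mathbb{Q}$, be a nonlinearizable germ, and let $g$ be a nondegenerate parabolic germ. Then $f$ and $g$ do not commute, i.e. $f\circ g\neq g\circ f$ as germs.
   Context: A germ $f(z)=e^{2\pi i\alpha}z+O(z^2)$ with $\alpha$ irrational is linearizable if there is a holomorphic $h(w)=w+O(w^2)$ with $h^{-1}\circ f\circ h=R_\alpha$, $R_\alpha(w)=e^{2\pi i\alpha}w$; otherwise nonlinearizable. A nondegenerate parabolic germ is a germ $g\in\mathrm{Diff}(\mathbb{C},0)$ with $g'(0)=e^{2\pi i p/q}$ a root of unity (so $g^q$ is tangent to the identity) such that $g^q\neq \mathrm{id}$. *)

theory Defs
  imports "HOL-Complex_Analysis.Complex_Analysis"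
begin

text \<open>A holomorphic germ at 0 fixing 0: represented by a function holomorphic
  on some disc around 0 with f 0 = 0. Germ equality = eventual equality in nhds 0.\<close>

definition holo_germ :: "(complex \<Rightarrow> complex) \<Rightarrow> bool" where
  "holo_germ f \<longleftrightarrow> (\<exists>r>0. f holomorphic_on ball 0 r) \<and> f 0 = 0"

definition germ_eq :: "(complex \<Rightarrow> complex) \<Rightarrow> (complex \<Rightarrow> complex) \<Rightarrow> bool" where
  "germ_eq f g \<longleftrightarrow> (\<forall>\<^sub>F z in nhds 0. f z = g z)"

definition rot :: "real \<Rightarrow> complex \<Rightarrow> complex" where
  "rot \<alpha> w = exp (2 * pi * \<i> * of_real \<alpha>) * w"

definition linearizable :: "real \<Rightarrow> (complex \<Rightarrow> complex) \<Rightarrow> bool" where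
  "linearizable \<alpha> f \<longleftrightarrow>
     (\<exists>h r. r > 0 \<and> h holomorphic_on ball 0 r \<and> inj_on h (ball 0 r) \<and>
            h 0 = 0 \<and> deriv h 0 = 1 \<and>
            germ_eq (\<lambda>w. inv_into (ball 0 r) h (f (h w))) (rot \<alpha>))"

definition nondegenerate_parabolic :: "(complex \<Rightarrow> complex) \<Rightarrow> bool" where
  "nondegenerate_parabolic g \<longleftrightarrow>
     holo_germ g \<and> deriv g 0 \<noteq> 0 \<and>
     (\<exists>(p::int) (q::nat). q > 0 \<and> coprime p (int q) \<and>
        deriv g 0 = exp (2 * pi * \<i> * of_real (real_of_int p / real q)) \<and>
        \<not> germ_eq (g ^^ q) id)"

end

theory Submission imports Defs begin

lemma key:
  fixes f u :: "complex \<Rightarrow> complex" and m :: nat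
  assumes r: "r > 0" and hf: "f holomorphic_on ball 0 r" and f0: "f 0 = 0"
    and hu: "u holomorphic_on ball 0 r" and u0: "u 0 \<noteq> 0" and m: "m > 0"
    and ev: "\<forall>\<^sub>F z in nhds 0. f (z + z^m * u z) = f z + (f z)^m * u (f z)"
  shows "deriv f 0 = (deriv f 0)^m"
proof -
  define L where "L = deriv f 0"
  define h where "h z = z^m * u z" for z
  have df: "\<And>w. w \<in> ball 0 r \<Longrightarrow> (f has_field_derivative deriv f w) (at w)"
    using hf holomorphic_derivI by blast
  have cu: "isCont u 0"
    using hu r by (meson centre_in_ball holomorphic_on_imp_continuous_on open_ball continuous_on_eq_continuous_at)
  have cf: "isCont f 0"
    using hf r by (meson centre_in_ball holomorphic_on_imp_continuous_on open_ball continuous_on_eq_continuous_at)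
  have fz: "((\<lambda>z. f z / z) \<longlongrightarrow> L) (at 0)"
    using df[of 0] r unfolding L_def has_field_derivative_iff by (simp add: f0)
  have f_to0: "(f \<longlongrightarrow> 0) (at 0)"
    using cf f0 by (metis continuous_at tendsto_at_iff_tendsto_nhds)
  have ufz: "((\<lambda>z. u (f z)) \<longlongrightarrow> u 0) (at 0)"
    using isCont_tendsto_compose[OF cu f_to0] .
  have B: "((\<lambda>z. (f z / z)^m * u (f z)) \<longlongrightarrow> L^m * u 0) (at 0)"
    by (intro tendsto_intros fz ufz)
  have ch: "isCont h 0"
    unfolding h_def using cu by (intro continuous_intros)
  have h0: "h 0 = 0" using m by (simp add: h_def)
  have h_to0: "(h \<longlongrightarrow> 0) (at 0)"
    using ch h0 by (metis continuous_at tendsto_at_iff_tendsto_nhds)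
  have Q: "((\<lambda>z. (f (z + h z) - f z) / h z) \<longlongrightarrow> L) (at 0)"
  proof (rule tendstoI)
    fix e :: real assume e: "e > 0"
    have hdf: "deriv f holomorphic_on ball 0 r" using hf by (simp add: holomorphic_deriv)
    have cdf: "isCont (deriv f) 0"
      using hdf r by (meson centre_in_ball holomorphic_on_imp_continuous_on open_ball continuous_on_eq_continuous_at)
    then obtain d where d: "d > 0" "\<And>w. dist w 0 < d \<Longrightarrow> dist (deriv f w) L < e/2"
      unfolding L_def continuous_at_eps_delta using e by (metis half_gt_zero)
    define \<delta> where "\<delta> = min d r"
    have \<delta>: "\<delta> > 0" "\<delta> \<le> r" "\<delta> \<le> d" using d r by (auto simp: \<delta>_def)
    have ev1: "\<forall>\<^sub>F z in at 0. norm z < \<delta>/2"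
      using \<delta> by (auto simp: eventually_at dist_norm intro!: exI[of _ "\<delta>/2"])
    have ev2: "\<forall>\<^sub>F z in at 0. norm (h z) < \<delta>/2"
      using tendstoD[OF h_to0, of "\<delta>/2"] \<delta> by (simp add: dist_norm)
    have ev3: "\<forall>\<^sub>F z in at 0. u z \<noteq> 0"
      using tendsto_imp_eventually_ne[OF cu[unfolded isCont_def] u0] .
    have ev4: "\<forall>\<^sub>F z in at 0. z \<noteq> 0" by (simp add: eventually_at_filter)
    show "\<forall>\<^sub>F z in at 0. dist ((f (z + h z) - f z) / h z) L < e"
      using ev1 ev2 ev3 ev4
    proof eventually_elim
      case (elim z)
      have hz: "h z \<noteq> 0" using elim by (simp add: h_def)
      have bnd: "norm ((f (z + h z) - L * (z + h z)) - (f z - L * z)) \<le> e/2 * norm ((z + h z) - z)"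
      proof (rule field_differentiable_bound[of "ball 0 \<delta>" _ "\<lambda>w. deriv f w - L"])
        show "convex (ball (0::complex) \<delta>)" by simp
        fix w assume w: "w \<in> ball (0::complex) \<delta>"
        then have "w \<in> ball 0 r" using \<delta> by auto
        then have "(f has_field_derivative deriv f w) (at w within ball 0 \<delta>)"
          using df has_field_derivative_at_within by blast
        then show "((\<lambda>w. f w - L * w) has_field_derivative deriv f w - L) (at w within ball 0 \<delta>)"
          by (auto intro!: derivative_eq_intros)
        show "norm (deriv f w - L) \<le> e/2"
          using d(2)[of w] w \<delta> by (simp add: dist_norm)
      next
        have "norm (z + h z) < \<delta>" using elim norm_triangle_ineq[of z "h z"] by linarith
        then show "z + h z \<in> ball 0 \<delta>" by simp
        have "norm z < \<delta>" using elim norm_ge_zero[of z] by linarith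
        then show "z \<in> ball 0 \<delta>" by simp
      qed
      define N where "N = (f (z + h z) - L * (z + h z)) - (f z - L * z)"
      have "(f (z + h z) - f z) / h z - L = N / h z"
      proof -
        have "N = (f (z + h z) - f z) - L * h z" unfolding N_def by (simp add: algebra_simps)
        then have "N / h z = (f (z + h z) - f z) / h z - L * h z / h z"
          by (simp add: diff_divide_distrib)
        then show ?thesis using hz by simp
      qed
      then have "dist ((f (z + h z) - f z) / h z) L = norm N / norm (h z)"
        by (simp add: dist_norm norm_divide)
      also have "\<dots> \<le> e/2"
        using bnd hz unfolding N_def[symmetric] by (simp add: divide_le_eq)
      finally have "dist ((f (z + h z) - f z) / h z) L \<le> e/2" .
      then show ?case using e by linarith
    qed
  qed
  have A: "((\<lambda>z. (f (z + h z) - f z) / h z * u z) \<longlongrightarrow> L * u 0) (at 0)"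
    using Q cu by (intro tendsto_intros) (auto simp: isCont_def)
  have eq: "\<forall>\<^sub>F z in at 0. (f (z + h z) - f z) / h z * u z = (f z / z)^m * u (f z)"
  proof -
    have ev3: "\<forall>\<^sub>F z in at 0. u z \<noteq> 0"
      using tendsto_imp_eventually_ne[OF cu[unfolded isCont_def] u0] .
    have ev4: "\<forall>\<^sub>F z in at 0. z \<noteq> 0" by (simp add: eventually_at_filter)
    have ev5: "\<forall>\<^sub>F z in at 0. f (z + z^m * u z) = f z + (f z)^m * u (f z)"
      using ev by (simp add: eventually_at_filter eventually_mono)
    show ?thesis using ev3 ev4 ev5
    proof eventually_elim
      case (elim z)
      have "(f (z + h z) - f z) / h z * u z = ((f z)^m * u (f z)) / (z^m * u z) * u z"
        using elim(3) by (simp add: h_def)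
      also have "\<dots> = (f z)^m * u (f z) / z^m"
        using elim(1,2) by simp
      also have "\<dots> = (f z / z)^m * u (f z)"
        by (simp add: power_divide)
      finally show ?case .
    qed
  qed
  have "L * u 0 = L^m * u 0"
    using tendsto_unique[OF _ tendsto_cong[THEN iffD1, OF eq A] B] by simp
  then show ?thesis using u0 unfolding L_def by simp
qed

lemma rat_of_root:
  fixes \<alpha> :: real and k :: nat
  assumes "k > 0" "exp (2 * pi * \<i> * of_real \<alpha>) ^ k = 1"
  shows "\<alpha> \<in> \<rat>"
proof -
  have "exp (of_nat k * (2 * pi * \<i> * of_real \<alpha>)) = 1"
    using assms(2) by (simp only: exp_of_nat_mult)
  then obtain n :: int where "Im (of_nat k * (2 * pi * \<i> * of_real \<alpha>)) = of_int (2 * n) * pi"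
    unfolding exp_eq_1 by blast
  then have "real k * (2 * pi * \<alpha>) = 2 * real_of_int n * pi" by simp
  then have "real k * \<alpha> = real_of_int n" using pi_gt_zero by (simp add: algebra_simps)
  then have "\<alpha> = real_of_int n / real k" using assms(1) by (simp add: field_simps)
  then show ?thesis by simp
qed

lemma root_one:
  fixes p :: int and q :: nat
  assumes "q > 0"
  shows "exp (2 * pi * \<i> * of_real (real_of_int p / real q)) ^ q = 1"
proof -
  have "exp (2 * pi * \<i> * of_real (real_of_int p / real q)) ^ q
      = exp (of_nat q * (2 * pi * \<i> * of_real (real_of_int p / real q)))"
    by (simp only: exp_of_nat_mult)
  also have "of_nat q * (2 * pi * \<i> * of_real (real_of_int p / real q)) = of_int p * (2 * of_real pi * \<i>)"
    using assms by (simp add: field_simps)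
  also have "exp (of_int p * (2 * of_real pi * \<i>)) = 1"
    unfolding exp_eq_1 by (auto intro!: exI[of _ p])
  finally show ?thesis .
qed

theorem theorem3p6:
  fixes f g :: "complex \<Rightarrow> complex" and \<alpha> :: real
  assumes "\<alpha> \<notin> \<rat>"
    and "holo_germ f"
    and "deriv f 0 = exp (2 * pi * \<i> * of_real \<alpha>)"
    and "\<not> linearizable \<alpha> f"
    and "nondegenerate_parabolic g"
  shows "\<not> germ_eq (f \<circ> g) (g \<circ> f)"
proof
  assume comm: "germ_eq (f \<circ> g) (g \<circ> f)"
  obtain rf where rf: "rf > 0" "f holomorphic_on ball 0 rf" and f0: "f 0 = 0"
    using assms(2) unfolding holo_germ_def by blast
  obtain rg where rg: "rg > 0" "g holomorphic_on ball 0 rg" and g0: "g 0 = 0"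
    using assms(5) unfolding nondegenerate_parabolic_def holo_germ_def by blast
  obtain p :: int and q :: nat where q: "q > 0"
    and dg: "deriv g 0 = exp (2 * pi * \<i> * of_real (real_of_int p / real q))"
    and ndeg: "\<not> germ_eq (g ^^ q) id"
    using assms(5) unfolding nondegenerate_parabolic_def by blast
  define \<mu> where "\<mu> = deriv g 0"
  have ga: "g analytic_on {0}" using rg analytic_at_ball by blast
  have fa: "f analytic_on {0}" using rf analytic_at_ball by blast
  have gd: "(g has_field_derivative \<mu>) (at 0)"
    unfolding \<mu>_def using rg holomorphic_derivI[OF rg(2)] by simp
  have fcont: "(f \<longlongrightarrow> 0) (nhds 0)"
    using analytic_at_imp_isCont[OF fa] f0 by (metis isCont_def tendsto_at_iff_tendsto_nhds)
  have cm: "\<forall>\<^sub>F z in nhds 0. f (g z) = g (f z)"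
    using comm unfolding germ_eq_def by simp
  have it: "(g ^^ n) analytic_on {0} \<and> (g ^^ n) 0 = 0 \<and> ((g ^^ n) has_field_derivative \<mu> ^ n) (at 0)
        \<and> (\<forall>\<^sub>F z in nhds 0. f ((g ^^ n) z) = (g ^^ n) (f z))" for n
  proof (induction n)
    case 0
    then show ?case by (simp add: analytic_on_ident)
  next
    case (Suc n)
    define G where "G = g ^^ n"
    have a: "G analytic_on {0}" "G 0 = 0" "(G has_field_derivative \<mu> ^ n) (at 0)"
      and e: "\<forall>\<^sub>F z in nhds 0. f (G z) = G (f z)"
      using Suc unfolding G_def by auto
    have s: "g ^^ Suc n = g \<circ> G" unfolding G_def by simp
    have an: "(g \<circ> G) analytic_on {0}"
      by (rule analytic_on_compose[OF a(1)]) (use ga a(2) in simp)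
    have dv: "((g \<circ> G) has_field_derivative \<mu> * \<mu> ^ n) (at 0)"
      using DERIV_chain[where f=g and g=G and x=0 and Da=\<mu> and Db="\<mu>^n" and s=UNIV] gd a by simp
    have Gt: "filterlim G (nhds 0) (nhds 0)"
      using analytic_at_imp_isCont[OF a(1)] a(2) by (metis isCont_def tendsto_at_iff_tendsto_nhds)
    have e2: "\<forall>\<^sub>F z in nhds 0. f (g (G z)) = g (f (G z))"
      using eventually_compose_filterlim[OF cm Gt] .
    have "\<forall>\<^sub>F z in nhds 0. f ((g \<circ> G) z) = (g \<circ> G) (f z)"
      using e e2 by eventually_elim simp
    then have "\<forall>\<^sub>F z in nhds 0. f ((g ^^ Suc n) z) = (g ^^ Suc n) (f z)" unfolding s .
    moreover have "(g ^^ Suc n) analytic_on {0}" unfolding s by (rule an)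
    moreover have "((g ^^ Suc n) has_field_derivative \<mu> ^ Suc n) (at 0)" unfolding s using dv by simp
    moreover have "(g ^^ Suc n) 0 = 0" unfolding s using a(2) g0 by simp
    ultimately show ?case by blast
  qed
  define G where "G = g ^^ q"
  have Ga: "G analytic_on {0}" and G0: "G 0 = 0" and Gd: "(G has_field_derivative \<mu> ^ q) (at 0)"
    and Gc: "\<forall>\<^sub>F z in nhds 0. f (G z) = G (f z)"
    using it[of q] unfolding G_def by auto
  have mq: "\<mu> ^ q = 1" unfolding \<mu>_def dg using root_one[OF q] .
  obtain rG where rG: "rG > 0" "G holomorphic_on ball 0 rG" using Ga analytic_at_ball by blast
  define H where "H w = G w - w" for w
  have Hh: "H holomorphic_on ball 0 rG" unfolding H_def using rG by (intro holomorphic_intros)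
  have H0: "H 0 = 0" using G0 by (simp add: H_def)
  have nc: "\<not> H constant_on ball 0 rG"
  proof
    assume "H constant_on ball 0 rG"
    then obtain c where c: "\<And>x. x \<in> ball 0 rG \<Longrightarrow> H x = c" unfolding constant_on_def by blast
    have "\<And>x. x \<in> ball 0 rG \<Longrightarrow> G x = id x"
      using c[of 0] c rG(1) H0 by (auto simp: H_def)
    then have "\<forall>\<^sub>F x in nhds 0. G x = id x"
      using eventually_nhds_in_open[of "ball 0 rG" 0] rG(1) by (auto elim: eventually_mono)
    then show False using ndeg unfolding germ_eq_def G_def by simp
  qed
  obtain u r1 n where n: "0 < n" and r1: "0 < r1" "ball (0::complex) r1 \<subseteq> ball 0 rG"
    and hu: "u holomorphic_on ball 0 r1"
    and Hf: "\<And>w. w \<in> ball 0 r1 \<Longrightarrow> H w = (w - 0)^n * u w"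
    and un: "\<And>w. w \<in> ball 0 r1 \<Longrightarrow> u w \<noteq> 0"
  proof (rule holomorphic_factor_zero_nonconstant[OF Hh open_ball connected_ball _ H0 nc])
    show "0 \<in> ball (0::complex) rG" using rG(1) by simp
  next
    fix g' r' n'
    assume "0 < n'" "0 < r'" "ball (0::complex) r' \<subseteq> ball 0 rG" "g' holomorphic_on ball 0 r'"
      "\<And>w. w \<in> ball 0 r' \<Longrightarrow> H w = (w - 0)^n' * g' w" "\<And>w. w \<in> ball 0 r' \<Longrightarrow> g' w \<noteq> 0"
    then show thesis by (rule that)
  qed
  have u0: "u 0 \<noteq> 0" using un r1 by simp
  have n2: "n \<ge> 2"
  proof (rule ccontr)
    assume "\<not> n \<ge> 2"
    then have n1: "n = 1" using n by simp
    have HD: "(H has_field_derivative 0) (at 0)"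
      unfolding H_def using Gd mq by (auto intro!: derivative_eq_intros)
    have ud: "(u has_field_derivative deriv u 0) (at 0)"
      using holomorphic_derivI[OF hu] r1 by simp
    have "((\<lambda>w. w * u w) has_field_derivative u 0) (at 0)"
      using ud by (auto intro!: derivative_eq_intros)
    then have "(H has_field_derivative u 0) (at 0)"
      by (rule has_field_derivative_transform_within_open[of _ _ _ "ball 0 r1"])
         (use r1 Hf n1 in auto)
    then have "u 0 = 0" using HD DERIV_unique by blast
    then show False using u0 by simp
  qed
  define r where "r = min rf r1"
  have r: "r > 0" using rf r1 by (simp add: r_def)
  have Gform: "\<And>w. w \<in> ball 0 r1 \<Longrightarrow> G w = w + w^n * u w"
    using Hf by (simp add: H_def algebra_simps)
  have ev1: "\<forall>\<^sub>F z in nhds 0. z \<in> ball 0 r1"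
    using eventually_nhds_in_open[of "ball 0 r1" 0] r1 by auto
  have ev2: "\<forall>\<^sub>F z in nhds 0. f z \<in> ball 0 r1"
    using eventually_compose_filterlim[OF ev1 fcont] .
  have ev: "\<forall>\<^sub>F z in nhds 0. f (z + z^n * u z) = f z + (f z)^n * u (f z)"
    using Gc ev1 ev2 by eventually_elim (simp add: Gform)
  have "deriv f 0 = (deriv f 0)^n"
    by (rule key[OF r _ f0 _ u0 n ev])
       (auto intro: holomorphic_on_subset[OF rf(2)] holomorphic_on_subset[OF hu] simp: r_def)
  then have "exp (2 * pi * \<i> * of_real \<alpha>) * exp (2 * pi * \<i> * of_real \<alpha>) ^ (n - 1)
           = exp (2 * pi * \<i> * of_real \<alpha>) * 1"
    using n assms(3) by (metis mult.right_neutral power_eq_if not_gr0)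
  then have "exp (2 * pi * \<i> * of_real \<alpha>) ^ (n - 1) = 1" by simp
  then have "\<alpha> \<in> \<rat>" using rat_of_root[of "n - 1" \<alpha>] n2 by simp
  then show False using assms(1) by simp
qed

end
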